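(* Let $X_1,\dots,X_n$ be i.i.d. with law $P_0$, and let $\{m_{\beta,\eta,\zeta}:\beta\in B,\eta\in\mathcal H_\eta,\zeta\in\Xi\}$ be measurable real functions, where $d$ is a metric on $\mathcal H_\eta$, $\beta_0\in\mathbb R^p$ and $\eta_0\in\mathcal H_\eta$. Suppose there are constants $C_1,C_2,C_3>0$ such that for all $\beta\in B,\eta\in\mathcal H_\eta,\zeta\in\Xi$, $$P_0(m_{\beta,\eta,\zeta}-m_{\beta,\eta_0,\zeta})\le-C_1d^2(\eta,\eta_0)+C_2\|\beta-\beta_0\|^2,$$ and for every $\delta>0$ and $n$, $$P_0^*\sup_{\beta\in B,\ \eta\in\mathcal H_\eta,\ \|\beta-\beta_0\|<\delta,\ d(\eta,\eta_0)<\delta,\ \zeta\in\Xi}\big|\mathbb G_n(m_{\beta,\eta,\zeta}-m_{\beta_0,\eta_0,\zeta})\big|\le C_3\phi_n(\delta),$$ for functions $\phi_n$ such that $\delta\mapsto\phi_n(\delta)/\delta^{a}$ is decreasing for some $a<2$. Let $\tilde\beta_n$ be a sequence of (random) elements and, for each $\zeta$, let $\hat\eta_{\tilde\beta_n}(\zeta)$ satisfy $\mathbb P_nm_{\tilde\beta_n,\hat\eta_{\tilde\beta_n}(\zeta),\zeta}\ge\mathbb P_nm_{\tilde\beta_n,\eta_0,\zeta}$ (e.g. a maximizer of $\eta\mapsto\mathbb P_nm_{\tilde\beta_n,\eta,\zeta}$), with $\Pr(\tilde\beta_n\in B,\ \hat\eta_{\tilde\beta_n}(\zeta)\in\mathcal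 H_\eta\ \forall\zeta\in\Xi)\to1$. Then for any sequence of positive numbers $r_n$ with $r_n^2\phi_n(1/r_n)\le\sqrt n$ for every $n$, $$\sup_{\zeta\in\Xi}r_n\,d(\hat\eta_{\tilde\beta_n}(\zeta),\eta_0)\le O^*_{P_0}\big(1+r_n\|\tilde\beta_n-\beta_0\|\big).$$
   Context: $\mathbb P_nf=n^{-1}\sum_if(X_i)$, $\mathbb G_nf=\sqrt n(\mathbb P_n-P_0)f$; $P_0^*$ denotes outer expectation and $O^*_{P_0}$ boundedness in outer probability. $\Xi$ is an arbitrary index set and $B\subset\mathbb R^p$. *)

theory Defs
  imports "HOL-Probability.Probability"
begin

definition emp_meas :: "(nat \<Rightarrow> 'w \<Rightarrow> 's) \<Rightarrow> nat \<Rightarrow> ('s \<Rightarrow> real) \<Rightarrow> 'w \<Rightarrow> real" where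
  "emp_meas X n f \<omega> = (\<Sum>i=1..n. f (X i \<omega>)) / real n"

definition emp_proc :: "'s measure \<Rightarrow> (nat \<Rightarrow> 'w \<Rightarrow> 's) \<Rightarrow> nat \<Rightarrow> ('s \<Rightarrow> real) \<Rightarrow> 'w \<Rightarrow> real" where
  "emp_proc P0 X n f \<omega> = sqrt (real n) * (emp_meas X n f \<omega> - (\<integral>x. f x \<partial>P0))"

definition outer_exp :: "'w measure \<Rightarrow> ('w \<Rightarrow> ennreal) \<Rightarrow> ennreal" where
  "outer_exp M f = (INF T \<in> {T \<in> borel_measurable M. \<forall>\<omega>\<in>space M. f \<omega> \<le> T \<omega>}. \<integral>\<^sup>+\<omega>. T \<omega> \<partial>M)"

definition outer_prob :: "'w measure \<Rightarrow> 'w set \<Rightarrow> real" where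
  "outer_prob M A = (INF B \<in> {B \<in> sets M. A \<inter> space M \<subseteq> B}. measure M B)"

end

theory Submission imports Defs begin

lemma phi_bound:
  fixes f :: "real \<Rightarrow> real"
  assumes dec: "\<forall>\<delta>1 \<delta>2. 0 < \<delta>1 \<longrightarrow> \<delta>1 \<le> \<delta>2 \<longrightarrow> f \<delta>2 / \<delta>2 powr a \<le> f \<delta>1 / \<delta>1 powr a"
  and r: "r > 0"
  shows "f (2^(k+1)/r) \<le> f (1/r) * 2 powr (real (k+1) * a)"
proof -
  let ?d2 = "2^(k+1)/r :: real"
  have "(1::real) \<le> 2^(k+1)" by (rule one_le_power) simp
  hence le: "1/r \<le> ?d2" using r by (simp add: divide_right_mono)
  have h: "f ?d2 / ?d2 powr a \<le> f (1/r) / (1/r) powr a" using dec le r by auto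
  have p2: "?d2 powr a > 0" using r by simp
  have "f ?d2 \<le> f (1/r) / (1/r) powr a * ?d2 powr a" using h p2 by (simp add: pos_divide_le_eq)
  also have "\<dots> = f (1/r) * (?d2 powr a / (1/r) powr a)" by simp
  also have "?d2 powr a / (1/r) powr a = (?d2 / (1/r)) powr a"
    using r by (simp add: powr_divide)
  also have "?d2 / (1/r) = 2 powr real (k+1)" using r by (simp add: powr_realpow del: of_nat_Suc)
  also have "(2 powr real (k+1)) powr a = 2 powr (real (k+1) * a)" by (simp add: powr_powr)
  finally show ?thesis .
qed

lemma markov_le:
  assumes "prob_space M" and T: "T \<in> borel_measurable M" and t: "t > 0"
    and I: "(\<integral>\<^sup>+\<omega>. T \<omega> \<partial>M) < ennreal c"
  shows "measure M {\<omega>\<in>space M. ennreal t \<le> T \<omega>} \<le> c / t"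
proof -
  interpret prob_space M by fact
  let ?A = "{\<omega>\<in>space M. ennreal t \<le> T \<omega>}"
  have A: "?A \<in> sets M" using T by measurable
  have "ennreal t * emeasure M ?A = (\<integral>\<^sup>+\<omega>. ennreal t * indicator ?A \<omega> \<partial>M)"
    using A by (simp add: nn_integral_cmult_indicator)
  also have "\<dots> \<le> (\<integral>\<^sup>+\<omega>. T \<omega> \<partial>M)"
    by (intro nn_integral_mono) (auto split: split_indicator)
  also have "\<dots> < ennreal c" by fact
  finally have "ennreal (t * measure M ?A) < ennreal c"
    using t by (simp add: emeasure_eq_measure ennreal_mult'')
  hence "t * measure M ?A < c" 
    by (metis ennreal_less_iff ennreal_neg le_less_linear less_le_not_le mult_nonneg_nonneg order_less_le t measure_nonneg ennreal_less_zero_iff)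
  thus ?thesis using t by (simp add: pos_le_divide_eq mult.commute)
qed


lemma shell_ineq:
  fixes D b r K C1 C2 s g1 g2 I :: real
  assumes "r>0" "K\<ge>1" "K^2*C1 \<ge> 2*C2" "C1>0" "C2>0" "b\<ge>0" "D \<ge> 0" "r*D > K*(1+r*b)"
    "s > 0" "0 \<le> (g1 - g2)/s + I" "I \<le> -C1*D^2 + C2*b^2"
  shows "s*C1*D^2/2 \<le> abs g1 + abs g2" "b < D"
proof -
  have "K*(r*b) \<le> K*(1+r*b)" using assms(2) by (intro mult_left_mono) auto
  hence "r*(K*b) < r*D" using assms(8) by (simp add: algebra_simps)
  hence kb: "K*b < D" using \<open>r>0\<close> mult_less_cancel_left_pos by blast
  have "b \<le> K*b" using assms(2,6) by (simp add: mult_right_mono[of 1 K b, simplified])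
  thus "b < D" using kb by linarith
  have "(K*b)^2 \<le> D^2" using kb assms by (intro power_mono) auto
  hence "C1*(K*b)^2 \<le> C1*D^2" using assms by (simp add: mult_left_mono)
  moreover have "2*C2*b^2 \<le> K^2*C1*b^2" using assms by (simp add: mult_right_mono)
  ultimately have "2*C2*b^2 \<le> C1*D^2" by (simp add: power_mult_distrib algebra_simps)
  hence "C1*D^2/2 \<le> (g1-g2)/s" using assms(10,11) by linarith
  hence "s*(C1*D^2/2) \<le> g1 - g2" using \<open>s>0\<close> by (simp add: pos_le_divide_eq mult.commute)
  thus "s*C1*D^2/2 \<le> abs g1 + abs g2" by linarith
qed

lemma peel:
  fixes u :: real assumes "u > 2^J"
  shows "\<exists>k>J. u \<le> 2^k \<and> 2^(k-1) < u"
proof -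
  obtain N where N: "u < 2^N" using real_arch_pow[of 2 u] by auto
  define k where "k = (LEAST k. u \<le> 2^k)"
  have k1: "u \<le> 2^k" unfolding k_def by (rule LeastI[of _ N]) (use N in auto)
  have k2: "\<And>i. i < k \<Longrightarrow> \<not> u \<le> 2^i" unfolding k_def by (rule not_less_Least)
  have "k > J"
  proof (rule ccontr)
    assume "\<not> k > J"
    hence "(2::real)^k \<le> 2^J" by (intro power_increasing) auto
    thus False using k1 assms by linarith
  qed
  moreover have "2^(k-1) < u" using k2[of "k-1"] \<open>k>J\<close> by auto
  ultimately show ?thesis using k1 by auto
qed


lemma pow_ident: "2 powr (real (k+1) * a) / 4^k = 2 powr a * (2 powr (a-2))^k"
proof -
  have "(2 powr (a-2))^k = 2 powr (real k * (a-2))" by (simp add: powr_power)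
  also have "\<dots> = 2 powr (real k * a) / 2 powr (real k * 2)" by (simp add: algebra_simps powr_diff)
  also have "2 powr (real k * 2) = (4::real)^k"
  proof -
    have "real k * 2 = real (2*k)" by simp
    hence "2 powr (real k * 2) = (2::real)^(2*k)" by (simp only: powr_realpow)
    also have "\<dots> = 4^k" by (simp add: power_mult)
    finally show ?thesis .
  qed
  finally have "(2 powr (a-2))^k = 2 powr (real k * a) / 4^k" .
  moreover have "2 powr (real (k+1) * a) = 2 powr a * 2 powr (real k * a)"
    by (simp add: algebra_simps powr_add)
  ultimately show ?thesis by simp
qed

lemma ratio_bound:
  fixes C1 C3 r sn p1 pk a :: real
  assumes "C1>0" "C3>0" "r>0" "sn>0" "p1 \<le> sn/r^2" "pk \<le> p1 * 2 powr (real (k+1) * a)"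
  shows "C3*pk / (sn*C1*4^k/(16*r^2)) \<le> 16*C3*(2 powr a)/C1 * (2 powr (a-2))^k"
proof -
  have "pk \<le> sn/r^2 * 2 powr (real (k+1) * a)"
    using assms(5,6) by (meson mult_right_mono order_trans powr_ge_zero)
  hence "C3*pk \<le> C3*(sn/r^2 * 2 powr (real (k+1) * a))" using assms by (intro mult_left_mono) auto
  hence "C3*pk / (sn*C1*4^k/(16*r^2)) \<le> C3*(sn/r^2 * 2 powr (real (k+1) * a)) / (sn*C1*4^k/(16*r^2))"
    using assms by (intro divide_right_mono) auto
  also have "\<dots> = 16*C3/C1 * (2 powr (real (k+1) * a) / 4^k)"
    using assms by (simp add: field_simps)
  also have "\<dots> = 16*C3*(2 powr a)/C1 * (2 powr (a-2))^k" unfolding pow_ident by simp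
  finally show ?thesis .
qed

theorem lemma4:
  fixes M :: "'w measure" and P0 :: "'s measure"
    and X :: "nat \<Rightarrow> 'w \<Rightarrow> 's"
    and m :: "real^'p \<Rightarrow> 'h \<Rightarrow> 'z \<Rightarrow> 's \<Rightarrow> real"
    and B :: "(real^'p) set" and H :: "'h set" and \<Xi> :: "'z set"
    and d :: "'h \<Rightarrow> 'h \<Rightarrow> real"
    and \<beta>0 :: "real^'p" and \<eta>0 :: "'h"
    and C1 C2 C3 :: real
    and \<phi> :: "nat \<Rightarrow> real \<Rightarrow> real"
    and \<beta>t :: "nat \<Rightarrow> 'w \<Rightarrow> real^'p"
    and \<eta>h :: "nat \<Rightarrow> 'z \<Rightarrow> 'w \<Rightarrow> 'h"
    and r :: "nat \<Rightarrow> real"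
  assumes M: "prob_space M"
    and P0: "prob_space P0"
    and X_meas: "\<And>i. X i \<in> measurable M P0"
    and X_indep: "prob_space.indep_vars M (\<lambda>_. P0) X UNIV"
    and X_law: "\<And>i. distr M P0 (X i) = P0"
    and d_metric: "Metric_space H d"
    and \<eta>0: "\<eta>0 \<in> H"
    and m_meas: "\<And>\<beta> \<eta> \<zeta>. \<beta> \<in> B \<Longrightarrow> \<eta> \<in> H \<Longrightarrow> \<zeta> \<in> \<Xi> \<Longrightarrow> m \<beta> \<eta> \<zeta> \<in> borel_measurable P0"
    and m_int1: "\<And>\<beta> \<eta> \<zeta>. \<beta> \<in> B \<Longrightarrow> \<eta> \<in> H \<Longrightarrow> \<zeta> \<in> \<Xi> \<Longrightarrow>
        integrable P0 (\<lambda>x. m \<beta> \<eta> \<zeta> x - m \<beta> \<eta>0 \<zeta> x)"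
    and m_int2: "\<And>\<beta> \<eta> \<zeta>. \<beta> \<in> B \<Longrightarrow> \<eta> \<in> H \<Longrightarrow> \<zeta> \<in> \<Xi> \<Longrightarrow>
        integrable P0 (\<lambda>x. m \<beta> \<eta> \<zeta> x - m \<beta>0 \<eta>0 \<zeta> x)"
    and C_pos: "C1 > 0" "C2 > 0" "C3 > 0"
    and curv: "\<And>\<beta> \<eta> \<zeta>. \<beta> \<in> B \<Longrightarrow> \<eta> \<in> H \<Longrightarrow> \<zeta> \<in> \<Xi> \<Longrightarrow>
        (\<integral>x. (m \<beta> \<eta> \<zeta> x - m \<beta> \<eta>0 \<zeta> x) \<partial>P0) \<le> - C1 * (d \<eta> \<eta>0)\<^sup>2 + C2 * (norm (\<beta> - \<beta>0))\<^sup>2"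
    and modulus: "\<And>\<delta> n. \<delta> > 0 \<Longrightarrow> n \<ge> 1 \<Longrightarrow>
        enn2ereal (outer_exp M (\<lambda>\<omega>. SUP (\<beta>, \<eta>, \<zeta>) \<in> {(\<beta>, \<eta>, \<zeta>). \<beta> \<in> B \<and> \<eta> \<in> H \<and>
              norm (\<beta> - \<beta>0) < \<delta> \<and> d \<eta> \<eta>0 < \<delta> \<and> \<zeta> \<in> \<Xi>}.
            ennreal \<bar>emp_proc P0 X n (\<lambda>x. m \<beta> \<eta> \<zeta> x - m \<beta>0 \<eta>0 \<zeta> x) \<omega>\<bar>))
        \<le> ereal (C3 * \<phi> n \<delta>)"
    and \<phi>_decr: "\<exists>a < 2. \<forall>n \<ge> 1. \<forall>\<delta>1 \<delta>2. 0 < \<delta>1 \<longrightarrow> \<delta>1 \<le> \<delta>2 \<longrightarrow>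
        \<phi> n \<delta>2 / \<delta>2 powr a \<le> \<phi> n \<delta>1 / \<delta>1 powr a"
    and \<eta>h_ge: "\<And>n \<zeta> \<omega>. n \<ge> 1 \<Longrightarrow> \<zeta> \<in> \<Xi> \<Longrightarrow> \<omega> \<in> space M \<Longrightarrow>
        emp_meas X n (m (\<beta>t n \<omega>) (\<eta>h n \<zeta> \<omega>) \<zeta>) \<omega> \<ge> emp_meas X n (m (\<beta>t n \<omega>) \<eta>0 \<zeta>) \<omega>"
    and in_sets: "(\<lambda>n. outer_prob M {\<omega> \<in> space M. \<not> (\<beta>t n \<omega> \<in> B \<and> (\<forall>\<zeta>\<in>\<Xi>. \<eta>h n \<zeta> \<omega> \<in> H))})
        \<longlonglongrightarrow> 0"
    and r_pos: "\<And>n. r n > 0"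
    and r_rate: "\<And>n. n \<ge> 1 \<Longrightarrow> (r n)\<^sup>2 * \<phi> n (1 / r n) \<le> sqrt (real n)"
  shows "\<forall>\<epsilon> > 0. \<exists>K. \<forall>\<^sub>F n in sequentially.
    outer_prob M {\<omega> \<in> space M.
       (SUP \<zeta> \<in> \<Xi>. ereal (r n * d (\<eta>h n \<zeta> \<omega>) \<eta>0)) > ereal (K * (1 + r n * norm (\<beta>t n \<omega> - \<beta>0)))} \<le> \<epsilon>"
proof (intro allI impI)
  fix \<epsilon> :: real assume \<epsilon>: "\<epsilon> > 0"
  interpret MM: prob_space M by (rule M)
  interpret dm: Metric_space H d by (rule d_metric)
  obtain a where a2: "a < 2" and dec: "\<forall>n \<ge> 1. \<forall>\<delta>1 \<delta>2. 0 < \<delta>1 \<longrightarrow> \<delta>1 \<le> \<delta>2 \<longrightarrow>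
        \<phi> n \<delta>2 / \<delta>2 powr a \<le> \<phi> n \<delta>1 / \<delta>1 powr a" using \<phi>_decr by blast
  define q where "q = (2::real) powr (a-2)"
  have q0: "0 < q" unfolding q_def by simp
  have q1: "q < 1" unfolding q_def using a2 by (intro powr_less_one) auto
  define A where "A = 16*C3*(2 powr a)/C1"
  have A0: "A \<ge> 0" unfolding A_def using C_pos by simp
  have "(\<lambda>J. A * q^J / (1-q)) \<longlonglongrightarrow> A * 0 / (1-q)"
    using q0 q1 by (intro tendsto_intros LIMSEQ_power_zero) auto
  hence "\<forall>\<^sub>F J in sequentially. A * q^J / (1-q) < \<epsilon>/4"
    using \<epsilon> by (intro order_tendstoD(2)) auto
  then obtain J where J: "A * q^J / (1-q) < \<epsilon>/4" 
    unfolding eventually_sequentially by auto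
  define K where "K = 2^J + sqrt (2*C2/C1)"
  have sq0: "sqrt (2*C2/C1) \<ge> 0" using C_pos by simp
  have KJ: "K \<ge> 2^J" unfolding K_def using sq0 by simp
  have "(1::real) \<le> 2^J" by (rule one_le_power) simp
  hence K1: "K \<ge> 1" using KJ by linarith
  have "K^2 \<ge> (sqrt (2*C2/C1))^2" unfolding K_def using sq0 by (intro power_mono) auto
  hence "K^2 \<ge> 2*C2/C1" using C_pos by simp
  hence KC: "K^2*C1 \<ge> 2*C2" using C_pos by (simp add: pos_divide_le_eq)
  define Bad where "Bad n = {\<omega> \<in> space M. \<not> (\<beta>t n \<omega> \<in> B \<and> (\<forall>\<zeta>\<in>\<Xi>. \<eta>h n \<zeta> \<omega> \<in> H))}" for n
  define E where "E n = {\<omega> \<in> space M.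
       (SUP \<zeta> \<in> \<Xi>. ereal (r n * d (\<eta>h n \<zeta> \<omega>) \<eta>0)) > ereal (K * (1 + r n * norm (\<beta>t n \<omega> - \<beta>0)))}" for n
  have main: "outer_prob M (E n) \<le> \<epsilon>" if n1: "n \<ge> 1" and nB: "outer_prob M (Bad n) < \<epsilon>/4" for n
  proof -
    have sn: "sqrt (real n) > 0" using n1 by simp
    have rn: "r n > 0" by (rule r_pos)
    have decn: "\<forall>\<delta>1 \<delta>2. 0 < \<delta>1 \<longrightarrow> \<delta>1 \<le> \<delta>2 \<longrightarrow> \<phi> n \<delta>2 / \<delta>2 powr a \<le> \<phi> n \<delta>1 / \<delta>1 powr a"
      using dec n1 by blast
    have p1: "\<phi> n (1 / r n) \<le> sqrt (real n) / (r n)^2"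
      using r_rate[OF n1] rn by (simp add: pos_le_divide_eq mult.commute)
    let ?OB = "{Bs \<in> sets M. Bad n \<inter> space M \<subseteq> Bs}"
    have "space M \<in> ?OB" by auto
    hence ne: "measure M ` ?OB \<noteq> {}" by blast
    have lt: "Inf (measure M ` ?OB) < \<epsilon>/4" using nB unfolding outer_prob_def .
    obtain x where x: "x \<in> measure M ` ?OB" "x < \<epsilon>/4" using cInf_lessD[OF ne lt] by blast
    then obtain G0 where G0': "G0 \<in> ?OB" "measure M G0 < \<epsilon>/4" by blast
    hence G0: "G0 \<in> sets M" "Bad n \<inter> space M \<subseteq> G0" "measure M G0 < \<epsilon>/4" by auto
    define \<delta> where "\<delta> j = 2^(j+1) / r n" for j :: nat
    define t where "t j = sqrt (real n) * C1 * 4^j / (16 * (r n)^2)" for j :: nat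
    define S where "S j = (\<lambda>\<omega>. SUP (\<beta>, \<eta>, \<zeta>) \<in> {(\<beta>, \<eta>, \<zeta>). \<beta> \<in> B \<and> \<eta> \<in> H \<and>
              norm (\<beta> - \<beta>0) < \<delta> j \<and> d \<eta> \<eta>0 < \<delta> j \<and> \<zeta> \<in> \<Xi>}.
            ennreal \<bar>emp_proc P0 X n (\<lambda>x. m \<beta> \<eta> \<zeta> x - m \<beta>0 \<eta>0 \<zeta> x) \<omega>\<bar>)" for j :: nat
    have \<delta>0: "\<delta> j > 0" for j unfolding \<delta>_def using rn by simp
    have t0: "t j > 0" for j unfolding t_def using rn sn C_pos by simp
    have oe: "outer_exp M (S j) < ennreal (C3 * \<phi> n (\<delta> j) + \<epsilon>/4 * (1/2)^(j+1) * t j)" for j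
    proof -
      have mj: "enn2ereal (outer_exp M (S j)) \<le> ereal (C3 * \<phi> n (\<delta> j))"
        unfolding S_def using modulus[OF \<delta>0 n1] .
      have c0: "0 \<le> C3 * \<phi> n (\<delta> j)"
        using mj order_trans[OF enn2ereal_nonneg mj] by simp
      have "outer_exp M (S j) = e2ennreal (enn2ereal (outer_exp M (S j)))" by simp
      also have "\<dots> \<le> e2ennreal (ereal (C3 * \<phi> n (\<delta> j)))" by (rule e2ennreal_mono[OF mj])
      also have "\<dots> = ennreal (C3 * \<phi> n (\<delta> j))" by simp
      also have "\<dots> < ennreal (C3 * \<phi> n (\<delta> j) + \<epsilon>/4 * (1/2)^(j+1) * t j)"
        using c0 \<epsilon> t0[of j] by (subst ennreal_less_iff) auto
      finally show ?thesis .
    qed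
    have "\<forall>j. \<exists>T. T \<in> borel_measurable M \<and> (\<forall>\<omega>\<in>space M. S j \<omega> \<le> T \<omega>) \<and>
        (\<integral>\<^sup>+\<omega>. T \<omega> \<partial>M) < ennreal (C3 * \<phi> n (\<delta> j) + \<epsilon>/4 * (1/2)^(j+1) * t j)"
      using oe unfolding outer_exp_def INF_less_iff by blast
    then obtain T where Tm: "\<And>j. T j \<in> borel_measurable M"
      and TS: "\<And>j \<omega>. \<omega> \<in> space M \<Longrightarrow> S j \<omega> \<le> T j \<omega>"
      and TI: "\<And>j. (\<integral>\<^sup>+\<omega>. T j \<omega> \<partial>M) < ennreal (C3 * \<phi> n (\<delta> j) + \<epsilon>/4 * (1/2)^(j+1) * t j)"
      by metis
    define As where "As j = {\<omega>\<in>space M. ennreal (t (j+J+1)) \<le> T (j+J+1) \<omega>}" for j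
    define b where "b j = A * q^(j+J+1) + \<epsilon>/4 * (1/2)^(j+1)" for j
    have As_sets: "As j \<in> sets M" for j unfolding As_def using Tm[of "j+J+1"] by measurable
    have Ab: "measure M (As j) \<le> b j" for j
    proof -
      define k where "k = j+J+1"
      have "measure M (As j) \<le> (C3 * \<phi> n (\<delta> k) + \<epsilon>/4 * (1/2)^(k+1) * t k) / t k"
        unfolding As_def k_def[symmetric] using M Tm[of k] t0[of k] TI[of k] by (rule markov_le)
      also have "\<dots> = C3 * \<phi> n (\<delta> k) / t k + \<epsilon>/4 * (1/2)^(k+1)"
        using t0[of k] by (simp add: add_divide_distrib)
      also have "C3 * \<phi> n (\<delta> k) / t k \<le> A * q^k"
        unfolding t_def \<delta>_def A_def q_def
        using C_pos(1,3) rn sn p1 phi_bound[OF decn rn, of k] by (rule ratio_bound)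
      also have "(1/2::real)^(k+1) \<le> (1/2)^(j+1)"
        unfolding k_def by (intro power_decreasing) auto
      hence "\<epsilon>/4 * (1/2::real)^(k+1) \<le> \<epsilon>/4 * (1/2)^(j+1)" using \<epsilon> by simp
      finally show ?thesis unfolding b_def k_def by simp
    qed
    define W where "W = G0 \<union> (\<Union>j. As j)"
    have W_sets: "W \<in> sets M" unfolding W_def using G0 As_sets by auto
    have EW: "E n \<inter> space M \<subseteq> W"
    proof
      fix \<omega> assume \<omega>E: "\<omega> \<in> E n \<inter> space M"
      hence \<omega>: "\<omega> \<in> space M" by auto
      show "\<omega> \<in> W"
      proof (cases "\<omega> \<in> Bad n")
        case True thus ?thesis using G0 \<omega> unfolding W_def by auto
      next
        case False
        hence \<beta>B: "\<beta>t n \<omega> \<in> B" and \<eta>H: "\<And>\<zeta>. \<zeta> \<in> \<Xi> \<Longrightarrow> \<eta>h n \<zeta> \<omega> \<in> H"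
          using \<omega> unfolding Bad_def by auto
        from \<omega>E obtain \<zeta> where \<zeta>: "\<zeta> \<in> \<Xi>"
          and gt': "ereal (K * (1 + r n * norm (\<beta>t n \<omega> - \<beta>0))) < ereal (r n * d (\<eta>h n \<zeta> \<omega>) \<eta>0)"
          unfolding E_def less_SUP_iff by auto
        define \<beta> where "\<beta> = \<beta>t n \<omega>"
        define \<eta> where "\<eta> = \<eta>h n \<zeta> \<omega>"
        define D where "D = d \<eta> \<eta>0"
        define bb where "bb = norm (\<beta> - \<beta>0)"
        have gt: "r n * D > K * (1 + r n * bb)" using gt' unfolding D_def bb_def \<beta>_def \<eta>_def by simp
        have \<beta>B': "\<beta> \<in> B" and \<eta>H': "\<eta> \<in> H" using \<beta>B \<eta>H[OF \<zeta>] unfolding \<beta>_def \<eta>_def by auto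
        define f1 where "f1 = (\<lambda>x. m \<beta> \<eta> \<zeta> x - m \<beta>0 \<eta>0 \<zeta> x)"
        define f2 where "f2 = (\<lambda>x. m \<beta> \<eta>0 \<zeta> x - m \<beta>0 \<eta>0 \<zeta> x)"
        define g1 where "g1 = emp_proc P0 X n f1 \<omega>"
        define g2 where "g2 = emp_proc P0 X n f2 \<omega>"
        define I where "I = (\<integral>x. (m \<beta> \<eta> \<zeta> x - m \<beta> \<eta>0 \<zeta> x) \<partial>P0)"
        have ge: "emp_meas X n (m \<beta> \<eta> \<zeta>) \<omega> \<ge> emp_meas X n (m \<beta> \<eta>0 \<zeta>) \<omega>"
          using \<eta>h_ge[OF n1 \<zeta> \<omega>] unfolding \<beta>_def \<eta>_def .
        have Ieq: "(\<integral>x. f1 x \<partial>P0) - (\<integral>x. f2 x \<partial>P0) = I"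
          unfolding f1_def f2_def I_def
          by (subst Bochner_Integration.integral_diff[symmetric])
             (auto intro!: m_int2 \<beta>B' \<eta>H' \<eta>0 \<zeta>)
        have decomp: "emp_meas X n (m \<beta> \<eta> \<zeta>) \<omega> - emp_meas X n (m \<beta> \<eta>0 \<zeta>) \<omega> = (g1 - g2) / sqrt (real n) + I"
        proof -
          have e1: "g1 / sqrt (real n) = emp_meas X n f1 \<omega> - (\<integral>x. f1 x \<partial>P0)"
            unfolding g1_def emp_proc_def using sn by simp
          have e2: "g2 / sqrt (real n) = emp_meas X n f2 \<omega> - (\<integral>x. f2 x \<partial>P0)"
            unfolding g2_def emp_proc_def using sn by simp
          have e3: "emp_meas X n f1 \<omega> - emp_meas X n f2 \<omega> = emp_meas X n (m \<beta> \<eta> \<zeta>) \<omega> - emp_meas X n (m \<beta> \<eta>0 \<zeta>) \<omega>"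
            unfolding emp_meas_def f1_def f2_def
            by (simp add: sum_subtractf diff_divide_distrib)
          show ?thesis unfolding diff_divide_distrib e1 e2 using e3 Ieq by linarith
        qed
        have curv': "I \<le> - C1 * D^2 + C2 * bb^2"
          unfolding I_def D_def bb_def using curv[OF \<beta>B' \<eta>H' \<zeta>] .
        have D0: "D \<ge> 0" unfolding D_def by simp
        have bb0: "bb \<ge> 0" unfolding bb_def by simp
        have h0: "0 \<le> (g1 - g2) / sqrt (real n) + I" using decomp ge by linarith
        note SI = shell_ineq[OF rn K1 KC C_pos(1,2) bb0 D0 gt sn h0 curv']
        have si: "sqrt (real n) * C1 * D^2 / 2 \<le> \<bar>g1\<bar> + \<bar>g2\<bar>" by (rule SI(1))
        have bD: "bb < D" by (rule SI(2))
        have "0 \<le> K*(r n*bb)" using K1 rn bb0 by simp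
        hence "K \<le> K*(1 + r n*bb)" by (simp add: algebra_simps)
        hence "r n * D > 2^J" using gt KJ by linarith
        then obtain kk where kJ: "kk > J" and ku: "r n * D \<le> 2^kk" and kl: "2^(kk-1) < r n * D"
          using peel[of J "r n * D"] by blast
        have "D \<le> 2^kk / r n" using ku rn by (simp add: pos_le_divide_eq mult.commute)
        also have "\<dots> < \<delta> kk" unfolding \<delta>_def using rn by (simp add: divide_strict_right_mono)
        finally have D\<delta>: "D < \<delta> kk" .
        have mem1: "(\<beta>, \<eta>, \<zeta>) \<in> {(\<beta>, \<eta>, \<zeta>). \<beta> \<in> B \<and> \<eta> \<in> H \<and>
              norm (\<beta> - \<beta>0) < \<delta> kk \<and> d \<eta> \<eta>0 < \<delta> kk \<and> \<zeta> \<in> \<Xi>}"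
          using \<beta>B' \<eta>H' \<zeta> D\<delta> bD unfolding D_def bb_def by auto
        have mem2: "(\<beta>, \<eta>0, \<zeta>) \<in> {(\<beta>, \<eta>, \<zeta>). \<beta> \<in> B \<and> \<eta> \<in> H \<and>
              norm (\<beta> - \<beta>0) < \<delta> kk \<and> d \<eta> \<eta>0 < \<delta> kk \<and> \<zeta> \<in> \<Xi>}"
          using \<beta>B' \<eta>0 \<zeta> D\<delta> bD \<delta>0[of kk] unfolding D_def bb_def by auto
        have S1: "ennreal \<bar>g1\<bar> \<le> S kk \<omega>" unfolding S_def g1_def f1_def
          by (rule SUP_upper2[OF mem1]) simp
        have S2: "ennreal \<bar>g2\<bar> \<le> S kk \<omega>" unfolding S_def g2_def f2_def
          by (rule SUP_upper2[OF mem2]) simp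
        have tk: "t kk \<le> max \<bar>g1\<bar> \<bar>g2\<bar>"
        proof -
          have k1: "kk \<ge> 1" using kJ by simp
          have "(2::real)^(kk-1) \<ge> 0" by simp
          hence "((2::real)^(kk-1))^2 \<le> (r n * D)^2" using kl by (intro power_mono) auto
          moreover have "(4::real)^kk = 4 * ((2::real)^(kk-1))^2"
          proof -
            have "(4::real)^kk = 4 * 4^(kk-1)" using k1 by (metis power_eq_if not_one_le_zero)
            also have "(4::real)^(kk-1) = ((2::real)^(kk-1))^2"
            proof -
              have "((2::real)^(kk-1))^2 = (2*2)^(kk-1)" by (simp only: power2_eq_square power_mult_distrib)
              thus ?thesis by simp
            qed
            finally show ?thesis .
          qed
          ultimately have "(4::real)^kk \<le> 4 * ((r n)^2 * D^2)" by (simp add: power_mult_distrib)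
          hence "(4::real)^kk / (16 * (r n)^2) \<le> D^2 / 4" using rn
            by (simp add: divide_le_eq field_simps)
          hence "sqrt (real n) * C1 * ((4::real)^kk / (16 * (r n)^2)) \<le> sqrt (real n) * C1 * (D^2/4)"
            using sn C_pos by (intro mult_left_mono) auto
          hence "t kk \<le> sqrt (real n) * C1 * D^2 / 4" unfolding t_def by simp
          thus ?thesis using si by linarith
        qed
        have "ennreal (t kk) \<le> ennreal (max \<bar>g1\<bar> \<bar>g2\<bar>)" using tk by (rule ennreal_leI)
        also have "\<dots> \<le> S kk \<omega>" using S1 S2 by (auto simp: max_def)
        also have "\<dots> \<le> T kk \<omega>" using TS[OF \<omega>] .
        finally have "\<omega> \<in> As (kk - J - 1)" unfolding As_def using \<omega> kJ by simp
        thus ?thesis unfolding W_def by blast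
      qed
    qed
    have bs: "b sums (A * q^(J+1) / (1-q) + \<epsilon>/4)"
    proof -
      have "(\<lambda>j. A * q^(J+1) * q^j) sums (A * q^(J+1) * (1 / (1-q)))"
        using q0 q1 by (intro sums_mult geometric_sums) auto
      moreover have "(\<lambda>j. \<epsilon>/4 * (1/2) * (1/2)^j) sums (\<epsilon>/4 * (1/2) * (1 / (1 - 1/2)))"
        by (intro sums_mult geometric_sums) auto
      ultimately have s1: "(\<lambda>j. A * q^(J+1) * q^j + \<epsilon>/4 * (1/2) * (1/2)^j) sums
          (A * q^(J+1) * (1 / (1-q)) + \<epsilon>/4 * (1/2) * (1 / (1 - 1/2)))"
        by (rule sums_add)
      have e1: "(\<lambda>j. A * q^(J+1) * q^j + \<epsilon>/4 * (1/2) * (1/2)^j) = b"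
      proof
        fix j
        have ff1: "A * q^(j+J+1) = A * q^(J+1) * q^j" by (subst mult.assoc, subst power_add[symmetric]) (simp add: ac_simps)
        have ff2: "(1/2::real)^(j+1) = 1/2 * (1/2)^j" by simp
        show "A * q^(J+1) * q^j + \<epsilon>/4 * (1/2) * (1/2)^j = b j"
          unfolding b_def ff1 ff2 by (simp only: mult.assoc)
      qed
      have e2: "A * q^(J+1) * (1 / (1-q)) + \<epsilon>/4 * (1/2) * (1 / (1 - 1/2)) = A * q^(J+1) / (1-q) + \<epsilon>/4"
        by simp
      show ?thesis using s1 unfolding e1 e2 .
    qed
    have mb0: "summable (\<lambda>j. measure M (As j))"
    proof (rule summable_comparison_test'[of b 0])
      show "summable b" using bs by (rule sums_summable)
      fix j :: nat
      have "0 \<le> measure M (As j)" by (rule measure_nonneg)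
      thus "norm (measure M (As j)) \<le> b j" using Ab[of j] by simp
    qed
    have "measure M (\<Union>j. As j) \<le> (\<Sum>j. measure M (As j))"
    proof (rule MM.finite_measure_subadditive_countably[OF _ mb0])
      show "range As \<subseteq> sets M" using As_sets by blast
    qed
    also have "\<dots> \<le> (\<Sum>j. b j)"
      by (rule suminf_le[OF Ab mb0 sums_summable[OF bs]])
    also have "\<dots> = A * q^(J+1) / (1-q) + \<epsilon>/4" using bs by (simp add: sums_iff)
    also have "A * q^(J+1) \<le> A * q^J" using A0 q0 q1 by (intro mult_left_mono power_decreasing) auto
    hence "A * q^(J+1) / (1-q) \<le> A * q^J / (1-q)" using q1 by (intro divide_right_mono) auto
    hence "A * q^(J+1) / (1-q) + \<epsilon>/4 \<le> \<epsilon>/4 + \<epsilon>/4" using J by linarith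
    finally have U: "measure M (\<Union>j. As j) \<le> \<epsilon>/2" by simp
    have "measure M W \<le> measure M G0 + measure M (\<Union>j. As j)"
      unfolding W_def using G0 As_sets by (intro measure_Un_le) auto
    also have "\<dots> \<le> \<epsilon>" using U G0 \<epsilon> by linarith
    finally have mW: "measure M W \<le> \<epsilon>" .
    have "outer_prob M (E n) \<le> measure M W" unfolding outer_prob_def
      using W_sets EW by (intro cINF_lower) (auto intro!: bdd_belowI[of _ 0])
    thus ?thesis using mW by linarith
  qed
  have "\<forall>\<^sub>F n in sequentially. outer_prob M (Bad n) < \<epsilon>/4"
    using in_sets \<epsilon> unfolding Bad_def by (intro order_tendstoD(2)) auto
  moreover have "\<forall>\<^sub>F n in sequentially. n \<ge> 1" by (rule eventually_ge_at_top)
  ultimately have "\<forall>\<^sub>F n in sequentially. outer_prob M (E n) \<le> \<epsilon>"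
    by eventually_elim (use main in auto)
  thus "\<exists>K. \<forall>\<^sub>F n in sequentially.
    outer_prob M {\<omega> \<in> space M.
       (SUP \<zeta> \<in> \<Xi>. ereal (r n * d (\<eta>h n \<zeta> \<omega>) \<eta>0)) > ereal (K * (1 + r n * norm (\<beta>t n \<omega> - \<beta>0)))} \<le> \<epsilon>"
    unfolding E_def by blast
qed
end
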